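(* Let $\mathcal S$ be a Garside family in a left-cancellative category $\mathcal C$, and let $\mathcal S'$ be a subfamily of $\mathcal S^\sharp$ such that $\mathcal S'(\mathcal S'\cap\mathcal C^\times)\subseteq\mathcal S'$ and every element of $\mathcal S'^{\,2}$ admits an $\mathcal S$-normal decomposition all of whose entries lie in $\mathcal S'$. Then every element of the subcategory of $\mathcal C$ generated by $\mathcal S'$ admits an $\mathcal S$-normal decomposition all of whose entries lie in $\mathcal S'$.
   Context: A category is left-cancellative if $fg=fg'\Rightarrow g=g'$. $\mathcal C^\times$ is the family of invertible elements; $\mathcal S^\sharp=\mathcal S\mathcal C^\times\cup\mathcal C^\times$; $\mathcal S'^{\,2}$ is the family of products $s_1s_2$ with $s_1,s_2\in\mathcal S'$, and $\mathcal S'(\mathcal S'\cap\mathcal C^\times)$ the family of products $s\epsilon$ with $s\in\mathcal S'$, $\epsilon\in\mathcal S'\cap\mathcal C^\times$. $f\preccurlyeq g$ means $g=fg'$ for some $g'$. A length-two path $(g_1,g_2)$ is $\mathcal S$-greedy if for all $s\in\mathcal S$ and $f\in\mathcal C$ with $fg_1$ defined, $s\preccurlyeq fg_1g_2$ implies $s\preccurlyeq fg_1$; a path is $\mathcal S$-greedy if all its length-two subpaths are. A path is $\mathcal S$-normal if it is $\mathcal S$-greedy with all entries in $\mathcal S^\sharp$. An $\mathcal S$-normal decomposition of $g$ is an $\mathcal S$-normal path whose product is $g$. $\mathcal S$ is a Garside family in $\mathcal C$ if every element of $\mathcal C$ admits an $\mathcal S$-normal decomposition. *)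

theory Defs
  imports Main
begin

text \<open>Following the Garside
convention, the product f g (written cmp f g) is defined iff tgt f = src g.\<close>

record ('o, 'm) cat =
  Ob  :: "'o set"
  Mor :: "'m set"
  src :: "'m \<Rightarrow> 'o"
  tgt :: "'m \<Rightarrow> 'o"
  idm :: "'o \<Rightarrow> 'm"
  cmp :: "'m \<Rightarrow> 'm \<Rightarrow> 'm"

definition defined :: "('o, 'm) cat \<Rightarrow> 'm \<Rightarrow> 'm \<Rightarrow> bool" where
  "defined C f g \<longleftrightarrow> f \<in> Mor C \<and> g \<in> Mor C \<and> tgt C f = src C g"

definition category :: "('o, 'm) cat \<Rightarrow> bool" where
  "category C \<longleftrightarrow>
     (\<forall>f\<in>Mor C. src C f \<in> Ob C \<and> tgt C f \<in> Ob C) \<and>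
     (\<forall>x\<in>Ob C. idm C x \<in> Mor C \<and> src C (idm C x) = x \<and> tgt C (idm C x) = x) \<and>
     (\<forall>f g. defined C f g \<longrightarrow> cmp C f g \<in> Mor C \<and>
            src C (cmp C f g) = src C f \<and> tgt C (cmp C f g) = tgt C g) \<and>
     (\<forall>f g h. defined C f g \<and> defined C g h \<longrightarrow>
            cmp C (cmp C f g) h = cmp C f (cmp C g h)) \<and>
     (\<forall>f\<in>Mor C. cmp C (idm C (src C f)) f = f \<and> cmp C f (idm C (tgt C f)) = f)"

definition left_cancellative :: "('o, 'm) cat \<Rightarrow> bool" where
  "left_cancellative C \<longleftrightarrow>
     (\<forall>f g g'. defined C f g \<and> defined C f g' \<and> cmp C f g = cmp C f g' \<longrightarrow> g = g')"

definition invertibles :: "('o, 'm) cat \<Rightarrow> 'm set" where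
  "invertibles C = {f \<in> Mor C. \<exists>g. defined C f g \<and> defined C g f \<and>
       cmp C f g = idm C (src C f) \<and> cmp C g f = idm C (tgt C f)}"

definition sharp :: "('o, 'm) cat \<Rightarrow> 'm set \<Rightarrow> 'm set" where
  "sharp C S = {cmp C s e | s e. s \<in> S \<and> e \<in> invertibles C \<and> defined C s e}
               \<union> invertibles C"

definition left_div :: "('o, 'm) cat \<Rightarrow> 'm \<Rightarrow> 'm \<Rightarrow> bool" where
  "left_div C f g \<longleftrightarrow> g \<in> Mor C \<and> (\<exists>g'. defined C f g' \<and> g = cmp C f g')"

definition greedy2 :: "('o, 'm) cat \<Rightarrow> 'm set \<Rightarrow> 'm \<Rightarrow> 'm \<Rightarrow> bool" where
  "greedy2 C S g1 g2 \<longleftrightarrow>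
     (\<forall>s\<in>S. \<forall>f. defined C f g1 \<longrightarrow>
        left_div C s (cmp C (cmp C f g1) g2) \<longrightarrow> left_div C s (cmp C f g1))"

fun is_path :: "('o, 'm) cat \<Rightarrow> 'o \<Rightarrow> 'm list \<Rightarrow> bool" where
  "is_path C x [] \<longleftrightarrow> x \<in> Ob C"
| "is_path C x (g # gs) \<longleftrightarrow> g \<in> Mor C \<and> src C g = x \<and> is_path C (tgt C g) gs"

fun path_prod :: "('o, 'm) cat \<Rightarrow> 'o \<Rightarrow> 'm list \<Rightarrow> 'm" where
  "path_prod C x [] = idm C x"
| "path_prod C x (g # gs) = cmp C g (path_prod C (tgt C g) gs)"

definition greedy_path :: "('o, 'm) cat \<Rightarrow> 'm set \<Rightarrow> 'm list \<Rightarrow> bool" where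
  "greedy_path C S gs \<longleftrightarrow> (\<forall>i. Suc i < length gs \<longrightarrow> greedy2 C S (gs ! i) (gs ! Suc i))"

definition normal_path :: "('o, 'm) cat \<Rightarrow> 'm set \<Rightarrow> 'o \<Rightarrow> 'm list \<Rightarrow> bool" where
  "normal_path C S x gs \<longleftrightarrow> is_path C x gs \<and> greedy_path C S gs \<and> set gs \<subseteq> sharp C S"

definition normal_decomp :: "('o, 'm) cat \<Rightarrow> 'm set \<Rightarrow> 'm \<Rightarrow> 'm list \<Rightarrow> bool" where
  "normal_decomp C S g gs \<longleftrightarrow>
     g \<in> Mor C \<and> normal_path C S (src C g) gs \<and> path_prod C (src C g) gs = g"

definition garside_family :: "('o, 'm) cat \<Rightarrow> 'm set \<Rightarrow> bool" where
  "garside_family C S \<longleftrightarrow> S \<subseteq> Mor C \<and> (\<forall>g\<in>Mor C. \<exists>gs. normal_decomp C S g gs)"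

definition generated_subcat :: "('o, 'm) cat \<Rightarrow> 'm set \<Rightarrow> 'm set" where
  "generated_subcat C S' = {path_prod C x gs | x gs. is_path C x gs \<and> set gs \<subseteq> S'}"

end

theory Submission
  imports Defs
begin


lemma gp_nil[simp]: "greedy_path C S []" by (simp add: greedy_path_def)
lemma gp_single[simp]: "greedy_path C S [a]" by (simp add: greedy_path_def)
lemma gp_cons2: "greedy_path C S (a#b#gs) \<longleftrightarrow> greedy2 C S a b \<and> greedy_path C S (b#gs)"
proof
  assume h: "greedy_path C S (a#b#gs)"
  have "greedy2 C S a b" using h[unfolded greedy_path_def, rule_format, of 0] by simp
  moreover have "greedy_path C S (b#gs)" unfolding greedy_path_def
  proof (intro allI impI)
    fix i assume "Suc i < length (b#gs)"
    thus "greedy2 C S ((b#gs) ! i) ((b#gs) ! Suc i)"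
      using h[unfolded greedy_path_def, rule_format, of "Suc i"] by simp
  qed
  ultimately show "greedy2 C S a b \<and> greedy_path C S (b#gs)" by blast
next
  assume h: "greedy2 C S a b \<and> greedy_path C S (b#gs)"
  show "greedy_path C S (a#b#gs)" unfolding greedy_path_def
  proof (intro allI impI)
    fix i assume i: "Suc i < length (a#b#gs)"
    show "greedy2 C S ((a#b#gs) ! i) ((a#b#gs) ! Suc i)"
    proof (cases i)
      case 0 thus ?thesis using h by simp
    next
      case (Suc j) thus ?thesis using h i unfolding greedy_path_def by auto
    qed
  qed
qed

lemma gp_tl: "greedy_path C S (a#gs) \<Longrightarrow> greedy_path C S gs"
  by (cases gs) (auto simp: gp_cons2)

locale lcat =
  fixes C :: "('o,'m) cat"
  assumes cat: "category C" and lcan: "left_cancellative C"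
begin

lemma mor_src[simp]: "f \<in> Mor C \<Longrightarrow> src C f \<in> Ob C" using cat unfolding category_def by blast
lemma mor_tgt[simp]: "f \<in> Mor C \<Longrightarrow> tgt C f \<in> Ob C" using cat unfolding category_def by blast
lemma id_mor[simp]: "x \<in> Ob C \<Longrightarrow> idm C x \<in> Mor C" using cat unfolding category_def by blast
lemma id_src[simp]: "x \<in> Ob C \<Longrightarrow> src C (idm C x) = x" using cat unfolding category_def by blast
lemma id_tgt[simp]: "x \<in> Ob C \<Longrightarrow> tgt C (idm C x) = x" using cat unfolding category_def by blast
lemma cmp_mor[simp]: "f \<in> Mor C \<Longrightarrow> g \<in> Mor C \<Longrightarrow> tgt C f = src C g \<Longrightarrow> cmp C f g \<in> Mor C"
  using cat unfolding category_def defined_def by blast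
lemma cmp_src[simp]: "f \<in> Mor C \<Longrightarrow> g \<in> Mor C \<Longrightarrow> tgt C f = src C g \<Longrightarrow> src C (cmp C f g) = src C f"
  using cat unfolding category_def defined_def by blast
lemma cmp_tgt[simp]: "f \<in> Mor C \<Longrightarrow> g \<in> Mor C \<Longrightarrow> tgt C f = src C g \<Longrightarrow> tgt C (cmp C f g) = tgt C g"
  using cat unfolding category_def defined_def by blast
lemma assoc: "f \<in> Mor C \<Longrightarrow> g \<in> Mor C \<Longrightarrow> h \<in> Mor C \<Longrightarrow> tgt C f = src C g \<Longrightarrow> tgt C g = src C h
   \<Longrightarrow> cmp C (cmp C f g) h = cmp C f (cmp C g h)"
  using cat unfolding category_def defined_def by blast
lemma idl[simp]: "f \<in> Mor C \<Longrightarrow> cmp C (idm C (src C f)) f = f" using cat unfolding category_def by blast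
lemma idr[simp]: "f \<in> Mor C \<Longrightarrow> cmp C f (idm C (tgt C f)) = f" using cat unfolding category_def by blast
lemma cancel: "f \<in> Mor C \<Longrightarrow> g \<in> Mor C \<Longrightarrow> g' \<in> Mor C \<Longrightarrow> tgt C f = src C g \<Longrightarrow> tgt C f = src C g'
   \<Longrightarrow> cmp C f g = cmp C f g' \<Longrightarrow> g = g'"
  using lcan unfolding left_cancellative_def defined_def by blast

lemma inv_mor: "x \<in> invertibles C \<Longrightarrow> x \<in> Mor C" by (simp add: invertibles_def)

lemma inv_obtain: assumes "x \<in> invertibles C"
  obtains y where "y \<in> Mor C" "src C y = tgt C x" "tgt C y = src C x"
    "cmp C x y = idm C (src C x)" "cmp C y x = idm C (tgt C x)"
  using assms unfolding invertibles_def defined_def by auto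

lemma RI: assumes d: "d \<in> Mor C" and q: "q \<in> Mor C" and dq: "tgt C d = src C q"
  and e: "cmp C d q = idm C (src C d)"
  shows "d \<in> invertibles C \<and> q \<in> invertibles C"
proof -
  have tq: "tgt C q = src C d" using e d q dq by (metis cmp_tgt id_tgt mor_src)
  have "cmp C d (cmp C q d) = cmp C (cmp C d q) d" using assoc d q dq tq by simp
  also have "\<dots> = cmp C d (idm C (tgt C d))" using e d by simp
  finally have qd: "cmp C q d = idm C (tgt C d)"
    using cancel[of d "cmp C q d" "idm C (tgt C d)"] d q dq tq by simp
  show ?thesis unfolding invertibles_def defined_def using d q dq tq e qd by auto
qed

lemma INV1: assumes a: "a \<in> Mor C" and b: "b \<in> Mor C" and ab: "tgt C a = src C b"
  and i: "cmp C a b \<in> invertibles C"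
  shows "a \<in> invertibles C \<and> b \<in> invertibles C"
proof -
  have sab: "src C (cmp C a b) = src C a" and tab: "tgt C (cmp C a b) = tgt C b"
    using a b ab by simp_all
  obtain z where z: "z \<in> Mor C" "src C z = tgt C (cmp C a b)"
    "cmp C (cmp C a b) z = idm C (src C (cmp C a b))" using inv_obtain[OF i] by blast
  have z2: "tgt C b = src C z" using z(2) tab by simp
  have "cmp C a (cmp C b z) = cmp C (cmp C a b) z" using assoc[OF a b z(1) ab z2] by simp
  also have "\<dots> = idm C (src C a)" using z(3) sab by simp
  finally have e1: "cmp C a (cmp C b z) = idm C (src C a)" .
  have bz: "cmp C b z \<in> Mor C" "src C (cmp C b z) = src C b" "tgt C (cmp C b z) = tgt C z"
    using b z(1) z2 by simp_all
  have r1: "a \<in> invertibles C \<and> cmp C b z \<in> invertibles C"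
    using RI[OF a bz(1) _ e1] ab bz(2) by simp
  obtain y where y: "y \<in> Mor C" "src C y = tgt C (cmp C b z)"
    "cmp C (cmp C b z) y = idm C (src C (cmp C b z))" using inv_obtain[of "cmp C b z"] r1 by blast
  have ty: "tgt C z = src C y" using y(2) bz(3) by simp
  have "cmp C b (cmp C z y) = cmp C (cmp C b z) y" using assoc[OF b z(1) y(1) z2 ty] by simp
  also have "\<dots> = idm C (src C b)" using y(3) bz(2) by simp
  finally have e2: "cmp C b (cmp C z y) = idm C (src C b)" .
  have zy: "cmp C z y \<in> Mor C" "src C (cmp C z y) = src C z" using z(1) y(1) ty by simp_all
  have "b \<in> invertibles C" using RI[OF b zy(1) _ e2] z2 zy(2) by simp
  thus ?thesis using r1 by blast
qed

lemma ld_ext: assumes "left_div C r a" "b \<in> Mor C" "tgt C a = src C b" "r \<in> Mor C"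
  shows "left_div C r (cmp C a b)"
proof -
  obtain g' where g: "g' \<in> Mor C" "tgt C r = src C g'" "a = cmp C r g'"
    using assms(1) unfolding left_div_def defined_def by blast
  have "tgt C g' = src C b" using g assms by simp
  hence "cmp C a b = cmp C r (cmp C g' b)" using g assms assoc by simp
  moreover have "cmp C a b \<in> Mor C" using g assms \<open>tgt C g' = src C b\<close> by simp
  ultimately show ?thesis unfolding left_div_def defined_def using g assms \<open>tgt C g' = src C b\<close>
    by (intro conjI exI[of _ "cmp C g' b"]) simp_all
qed


lemma sharp_mor: "sharp C S \<subseteq> Mor C"
  unfolding sharp_def defined_def by (auto simp: inv_mor)

lemma gr_ext: assumes gr: "greedy2 C S g (cmp C X Y)" and X: "X \<in> Mor C" and Y: "Y \<in> Mor C"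
  and XY: "tgt C X = src C Y" and g: "g \<in> Mor C" and gX: "tgt C g = src C X"
  and SM: "S \<subseteq> Mor C"
  shows "greedy2 C S g X"
  unfolding greedy2_def
proof (intro ballI allI impI)
  fix r f assume r: "r \<in> S" and fg: "defined C f g" and ld: "left_div C r (cmp C (cmp C f g) X)"
  have f: "f \<in> Mor C" "tgt C f = src C g" using fg unfolding defined_def by auto
  have fg1: "cmp C f g \<in> Mor C" "tgt C (cmp C f g) = tgt C g" using f g by simp_all
  have fgX: "cmp C (cmp C f g) X \<in> Mor C" "tgt C (cmp C (cmp C f g) X) = tgt C X"
    using fg1 X gX by simp_all
  have "left_div C r (cmp C (cmp C (cmp C f g) X) Y)"
    using ld_ext[OF ld Y] fgX XY r SM by auto
  moreover have "cmp C (cmp C (cmp C f g) X) Y = cmp C (cmp C f g) (cmp C X Y)"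
    using assoc[OF fg1(1) X Y] fg1(2) gX XY by simp
  ultimately show "left_div C r (cmp C f g)"
    using gr r fg unfolding greedy2_def by auto
qed

lemma gr_pre: assumes gr: "greedy2 C S h X" and s: "s \<in> Mor C" and h: "h \<in> Mor C"
  and sh: "tgt C s = src C h"
  shows "greedy2 C S (cmp C s h) X"
  unfolding greedy2_def
proof (intro ballI allI impI)
  fix r f assume r: "r \<in> S" and fu: "defined C f (cmp C s h)"
    and ld: "left_div C r (cmp C (cmp C f (cmp C s h)) X)"
  have f: "f \<in> Mor C" "tgt C f = src C s" using fu s h sh unfolding defined_def by auto
  have e: "cmp C f (cmp C s h) = cmp C (cmp C f s) h" using assoc[OF f(1) s h f(2) sh] by simp
  have d: "defined C (cmp C f s) h" unfolding defined_def using f s h sh by simp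
  show "left_div C r (cmp C f (cmp C s h))"
    using gr r d ld unfolding e greedy2_def by blast
qed

lemma gr_comb: assumes g1: "greedy2 C S u t" and g2: "greedy2 C S (cmp C u t) P"
  and u: "u \<in> Mor C" and t: "t \<in> Mor C" and P: "P \<in> Mor C"
  and ut: "tgt C u = src C t" and tP: "tgt C t = src C P"
  shows "greedy2 C S u (cmp C t P)"
  unfolding greedy2_def
proof (intro ballI allI impI)
  fix r f assume r: "r \<in> S" and fu: "defined C f u"
    and ld: "left_div C r (cmp C (cmp C f u) (cmp C t P))"
  have f: "f \<in> Mor C" "tgt C f = src C u" using fu unfolding defined_def by auto
  have fu1: "cmp C f u \<in> Mor C" "tgt C (cmp C f u) = tgt C u" using f u by simp_all
  have e1: "cmp C (cmp C f u) (cmp C t P) = cmp C (cmp C (cmp C f u) t) P"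
    using assoc[OF fu1(1) t P] fu1(2) ut tP by simp
  have e2: "cmp C (cmp C f u) t = cmp C f (cmp C u t)" using assoc[OF f(1) u t f(2) ut] by simp
  have d: "defined C f (cmp C u t)" unfolding defined_def using f u t ut by simp
  have "left_div C r (cmp C f (cmp C u t))"
    using g2 r d ld unfolding e1 e2 greedy2_def by blast
  hence "left_div C r (cmp C (cmp C f u) t)" using e2 by simp
  thus "left_div C r (cmp C f u)" using g1 r fu unfolding greedy2_def by blast
qed

lemma path_mor: "is_path C x gs \<Longrightarrow> path_prod C x gs \<in> Mor C \<and> src C (path_prod C x gs) = x"
proof (induction gs arbitrary: x)
  case Nil thus ?case by simp
next
  case (Cons g gs)
  hence g: "g \<in> Mor C" "src C g = x" and p: "is_path C (tgt C g) gs" by auto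
  from Cons.IH[OF p] have P: "path_prod C (tgt C g) gs \<in> Mor C" "src C (path_prod C (tgt C g) gs) = tgt C g"
    by auto
  show ?case using g P by simp
qed

lemma L: "is_path C x (g#gs) \<Longrightarrow> greedy_path C S (g#gs) \<Longrightarrow> S \<subseteq> Mor C \<Longrightarrow>
   greedy2 C S g (path_prod C (tgt C g) gs)"
proof (induction gs arbitrary: g x)
  case Nil
  hence g: "g \<in> Mor C" by simp
  show ?case unfolding greedy2_def
  proof (intro ballI allI impI)
    fix r f assume "r \<in> S" "defined C f g" and ld: "left_div C r (cmp C (cmp C f g) (path_prod C (tgt C g) []))"
    hence f: "f \<in> Mor C" "tgt C f = src C g" unfolding defined_def by auto
    have "cmp C (cmp C f g) (path_prod C (tgt C g) []) = cmp C f g"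
      using idr[of "cmp C f g"] f g by simp
    thus "left_div C r (cmp C f g)" using ld by simp
  qed
next
  case (Cons h hs)
  have g: "g \<in> Mor C" and h: "h \<in> Mor C" and gh: "tgt C g = src C h"
    and ph: "is_path C (tgt C h) hs" and pgh: "is_path C (tgt C g) (h#hs)" using Cons.prems by auto
  have gr1: "greedy2 C S g h" and gp: "greedy_path C S (h#hs)" using Cons.prems by (auto simp: gp_cons2)
  have IH: "greedy2 C S h (path_prod C (tgt C h) hs)" using Cons.IH[OF pgh gp Cons.prems(3)] .
  have P: "path_prod C (tgt C h) hs \<in> Mor C" "src C (path_prod C (tgt C h) hs) = tgt C h"
    using path_mor[OF ph] by auto
  have "greedy2 C S (cmp C g h) (path_prod C (tgt C h) hs)" using gr_pre[OF IH g h gh] .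
  from gr_comb[OF gr1 this g h P(1) gh P(2)[symmetric]]
  show ?case by simp
qed

lemma inv_path: "is_path C x W \<Longrightarrow> path_prod C x W \<in> invertibles C \<Longrightarrow> set W \<subseteq> invertibles C"
proof (induction W arbitrary: x)
  case Nil thus ?case by simp
next
  case (Cons w W)
  hence w: "w \<in> Mor C" and p: "is_path C (tgt C w) W" by auto
  have P: "path_prod C (tgt C w) W \<in> Mor C" "src C (path_prod C (tgt C w) W) = tgt C w"
    using path_mor[OF p] by auto
  have "w \<in> invertibles C \<and> path_prod C (tgt C w) W \<in> invertibles C"
    using INV1[OF w P(1)] P(2) Cons.prems(2) by simp
  thus ?case using Cons.IH[OF p] by simp
qed

lemma SD: assumes x: "x \<in> sharp C S" and gr: "greedy2 C S g Y"
  and f: "f \<in> Mor C" and g: "g \<in> Mor C" and Y: "Y \<in> Mor C" and y: "y \<in> Mor C"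
  and fg: "tgt C f = src C g" and gY: "tgt C g = src C Y" and xy: "tgt C x = src C y"
  and e: "cmp C x y = cmp C (cmp C f g) Y" and SM: "S \<subseteq> Mor C"
  shows "\<exists>c. c \<in> Mor C \<and> tgt C x = src C c \<and> cmp C f g = cmp C x c"
proof -
  have xM: "x \<in> Mor C" using x sharp_mor[of S] SM by blast
  have fg1: "cmp C f g \<in> Mor C" "src C (cmp C f g) = src C f" "tgt C (cmp C f g) = tgt C g"
    using f g fg by simp_all
  have sx: "src C x = src C f"
  proof -
    have "src C (cmp C x y) = src C x" using xM y xy by simp
    moreover have "src C (cmp C (cmp C f g) Y) = src C f" using fg1 Y gY by simp
    ultimately show ?thesis using e by simp
  qed
  from x consider (a) a e' where "a \<in> S" "e' \<in> invertibles C" "defined C a e'" "x = cmp C a e'"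
    | (b) "x \<in> invertibles C" unfolding sharp_def by blast
  thus ?thesis
  proof cases
    case a
    have aM: "a \<in> Mor C" using a SM by auto
    have eM: "e' \<in> Mor C" using a inv_mor by auto
    have ae: "tgt C a = src C e'" using a unfolding defined_def by auto
    have tx: "tgt C x = tgt C e'" using a aM eM ae by simp
    have ey: "tgt C e' = src C y" using xy tx by simp
    have "cmp C x y = cmp C a (cmp C e' y)" using assoc[OF aM eM y ae ey] a(4) by simp
    moreover have "cmp C e' y \<in> Mor C" "src C (cmp C e' y) = src C e'" using eM y ey by simp_all
    ultimately have "left_div C a (cmp C x y)" unfolding left_div_def defined_def
      apply (intro conjI exI[of _ "cmp C e' y"])
      using xM y xy ae aM cmp_mor[OF xM y xy] by simp_all
    hence "left_div C a (cmp C (cmp C f g) Y)" using e by simp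
    hence "left_div C a (cmp C f g)" using gr a(1) fg f g unfolding greedy2_def defined_def by blast
    then obtain c' where c': "c' \<in> Mor C" "tgt C a = src C c'" "cmp C f g = cmp C a c'"
      unfolding left_div_def defined_def by blast
    obtain e'' where e'': "e'' \<in> Mor C" "src C e'' = tgt C e'" "tgt C e'' = src C e'"
      "cmp C e' e'' = idm C (src C e')" using inv_obtain[OF a(2)] by blast
    have ec: "tgt C e'' = src C c'" using e''(3) ae c'(2) by simp
    define c where "c = cmp C e'' c'"
    have cM: "c \<in> Mor C" "src C c = tgt C e'" unfolding c_def using e'' c' ec by simp_all
    have "cmp C x c = cmp C a (cmp C e' c)" using assoc[OF aM eM cM(1) ae cM(2)[symmetric]] a(4) by simp
    also have "cmp C e' c = cmp C (cmp C e' e'') c'" unfolding c_def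
      using assoc[OF eM e''(1) c'(1) e''(2)[symmetric] ec] by simp
    also have "\<dots> = c'" using e''(4) ae c'(2) c'(1) idl[of c'] by simp
    finally have "cmp C x c = cmp C a c'" .
    thus ?thesis using cM tx c'(3) by auto
  next
    case b
    obtain x' where x': "x' \<in> Mor C" "src C x' = tgt C x" "tgt C x' = src C x"
      "cmp C x x' = idm C (src C x)" using inv_obtain[OF b] by blast
    define c where "c = cmp C x' (cmp C f g)"
    have x'fg: "tgt C x' = src C (cmp C f g)" using x'(3) sx fg1(2) by simp
    have cM: "c \<in> Mor C" "src C c = tgt C x" unfolding c_def using x' fg1 x'fg by simp_all
    have "cmp C x c = cmp C (cmp C x x') (cmp C f g)" unfolding c_def
      using assoc[OF xM x'(1) fg1(1) x'(2)[symmetric] x'fg] by simp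
    also have "\<dots> = cmp C f g" using x'(4) sx fg1 idl[of "cmp C f g"] by simp
    finally show ?thesis using cM by auto
  qed
qed

end


locale ctx = lcat +
  fixes S S' :: "'m set"
  assumes gar: "garside_family C S"
    and sub: "S' \<subseteq> sharp C S"
    and clos: "\<forall>s\<in>S'. \<forall>e\<in>S' \<inter> invertibles C. defined C s e \<longrightarrow> cmp C s e \<in> S'"
    and sq: "\<forall>s1\<in>S'. \<forall>s2\<in>S'. defined C s1 s2 \<longrightarrow>
           (\<exists>gs. normal_decomp C S (cmp C s1 s2) gs \<and> set gs \<subseteq> S')"
begin

lemma SM: "S \<subseteq> Mor C" using gar unfolding garside_family_def by blast
lemma S'M: "S' \<subseteq> Mor C" using sub sharp_mor[of S] SM by blast

lemma fold: "u \<in> S' \<Longrightarrow> is_path C (tgt C u) W \<Longrightarrow> set W \<subseteq> S' \<inter> invertibles C \<Longrightarrow>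
  cmp C u (path_prod C (tgt C u) W) \<in> S'"
proof (induction W arbitrary: u)
  case Nil
  have "u \<in> Mor C" using Nil S'M by auto
  thus ?case using Nil by simp
next
  case (Cons w W)
  have u: "u \<in> Mor C" using Cons S'M by auto
  have w: "w \<in> Mor C" "src C w = tgt C u" and p: "is_path C (tgt C w) W" using Cons.prems by auto
  have wS: "w \<in> S' \<inter> invertibles C" using Cons.prems by auto
  have uw: "cmp C u w \<in> S'" using clos Cons.prems(1) wS u w unfolding defined_def by auto
  have tuw: "tgt C (cmp C u w) = tgt C w" using u w by simp
  have P: "path_prod C (tgt C w) W \<in> Mor C" "src C (path_prod C (tgt C w) W) = tgt C w"
    using path_mor[OF p] by auto
  have IH: "cmp C (cmp C u w) (path_prod C (tgt C w) W) \<in> S'"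
    using Cons.IH[OF uw] p tuw Cons.prems(3) by simp
  have "cmp C (cmp C u w) (path_prod C (tgt C w) W) = cmp C u (cmp C w (path_prod C (tgt C w) W))"
    using assoc[OF u w(1) P(1) w(2)[symmetric] P(2)[symmetric]] .
  thus ?case using IH w by simp
qed

lemma len2: assumes s1: "s1 \<in> S'" and s2: "s2 \<in> S'" and d: "tgt C s1 = src C s2"
  shows "\<exists>D. normal_decomp C S (cmp C s1 s2) D \<and> set D \<subseteq> S' \<and> length D \<le> 2"
proof -
  have s1M: "s1 \<in> Mor C" and s2M: "s2 \<in> Mor C" using s1 s2 S'M by auto
  obtain D0 where D0: "normal_decomp C S (cmp C s1 s2) D0" "set D0 \<subseteq> S'"
    using sq s1 s2 s1M s2M d unfolding defined_def by blast
  show ?thesis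
  proof (cases "length D0 \<le> 2")
    case True thus ?thesis using D0 by blast
  next
    case False
    have "\<exists>u1 u2 w W. D0 = u1#u2#w#W" using False
      by (cases D0; simp; rename_tac a l; case_tac l; simp; rename_tac b l'; case_tac l'; simp)
    then obtain u1 u2 w W where D0eq: "D0 = u1#u2#w#W" by blast
    define g where "g = cmp C s1 s2"
    define W' where "W' = w#W"
    have gM: "g \<in> Mor C" and sg: "src C g = src C s1" using s1M s2M d unfolding g_def by simp_all
    have pD: "is_path C (src C g) D0" and gp: "greedy_path C S D0"
      and prod: "path_prod C (src C g) D0 = g"
      using D0(1) unfolding normal_decomp_def normal_path_def g_def by auto
    have u1: "u1 \<in> Mor C" "src C u1 = src C g" and pu2: "is_path C (tgt C u1) (u2#W')"
      using pD unfolding D0eq W'_def by auto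
    have u2: "u2 \<in> Mor C" "src C u2 = tgt C u1" and pW: "is_path C (tgt C u2) W'"
      using pu2 by auto
    define Q where "Q = path_prod C (tgt C u2) W'"
    define U where "U = path_prod C (tgt C u1) (u2#W')"
    have Q: "Q \<in> Mor C" "src C Q = tgt C u2" using path_mor[OF pW] unfolding Q_def by auto
    have U: "U \<in> Mor C" "src C U = tgt C u1" using path_mor[OF pu2] unfolding U_def by auto
    have UQ: "U = cmp C u2 Q" unfolding U_def Q_def by simp
    have prod2: "cmp C u1 U = g" using prod unfolding D0eq U_def W'_def by simp
    have gr1: "greedy2 C S u1 U" using L[OF pD[unfolded D0eq] gp[unfolded D0eq] SM]
      unfolding U_def W'_def .
    have gp2: "greedy_path C S (u2#W')" using gp unfolding D0eq W'_def by (simp add: gp_cons2)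
    have gr2: "greedy2 C S u2 Q" using L[OF pu2 gp2 SM] unfolding Q_def .
    have s1sh: "s1 \<in> sharp C S" and s2sh: "s2 \<in> sharp C S" using s1 s2 sub by auto
    have idM: "idm C (src C u1) \<in> Mor C" "tgt C (idm C (src C u1)) = src C u1" using u1 gM by simp_all
    have e1: "cmp C s1 s2 = cmp C (cmp C (idm C (src C u1)) u1) U" using prod2 u1(1) unfolding g_def by simp
    obtain c where c: "c \<in> Mor C" "tgt C s1 = src C c" "cmp C (idm C (src C u1)) u1 = cmp C s1 c"
      using SD[OF s1sh gr1 idM(1) u1(1) U(1) s2M idM(2) U(2)[symmetric] d e1 SM] by blast
    have u1c: "u1 = cmp C s1 c" using c(3) u1(1) by simp
    have tc: "tgt C c = tgt C u1" using u1c s1M c by simp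
    have "cmp C s1 s2 = cmp C (cmp C s1 c) U" using prod2 u1c unfolding g_def by simp
    also have "\<dots> = cmp C s1 (cmp C c U)" using assoc[OF s1M c(1) U(1) c(2)] tc U(2) by simp
    finally have s2e: "s2 = cmp C c U"
      using cancel[OF s1M s2M _ d] c U tc by simp
    have cu2: "tgt C c = src C u2" using tc u2 by simp
    have idM2: "idm C (tgt C s2) \<in> Mor C" "src C (idm C (tgt C s2)) = tgt C s2" using s2M by simp_all
    have e2: "cmp C s2 (idm C (tgt C s2)) = cmp C (cmp C c u2) Q"
      using s2M s2e UQ assoc[OF c(1) u2(1) Q(1) cu2 Q(2)[symmetric]] by simp
    obtain dd where dd: "dd \<in> Mor C" "tgt C s2 = src C dd" "cmp C c u2 = cmp C s2 dd"
      using SD[OF s2sh gr2 c(1) u2(1) Q(1) idM2(1) cu2 Q(2)[symmetric] idM2(2)[symmetric] e2 SM] by blast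
    have tdd: "tgt C dd = src C Q"
    proof -
      have "tgt C (cmp C c u2) = tgt C u2" using c(1) u2(1) cu2 by simp
      moreover have "tgt C (cmp C s2 dd) = tgt C dd" using s2M dd by simp
      ultimately show ?thesis using dd(3) Q(2) by simp
    qed
    have "cmp C s2 (idm C (tgt C s2)) = cmp C (cmp C s2 dd) Q" using e2 dd(3) by simp
    also have "\<dots> = cmp C s2 (cmp C dd Q)" using assoc[OF s2M dd(1) Q(1) dd(2) tdd] .
    finally have "idm C (tgt C s2) = cmp C dd Q"
      using cancel[OF s2M idM2(1), of "cmp C dd Q"] idM2 dd Q tdd by simp
    hence "cmp C dd Q = idm C (src C dd)" using dd(2) by simp
    hence Qi: "Q \<in> invertibles C" using RI[OF dd(1) Q(1) tdd] by blast
    have Wi: "set W' \<subseteq> invertibles C" using inv_path[OF pW] Qi unfolding Q_def by blast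
    have WS: "set W' \<subseteq> S'" and u1S: "u1 \<in> S'" and u2S: "u2 \<in> S'"
      using D0(2) unfolding D0eq W'_def by auto
    have US: "U \<in> S'" using fold[OF u2S pW] Wi WS UQ unfolding Q_def by auto
    have nd: "normal_decomp C S g [u1, U]"
      unfolding normal_decomp_def normal_path_def
    proof (intro conjI)
      show "g \<in> Mor C" by (rule gM)
      show "is_path C (src C g) [u1, U]" using u1 U by simp
      show "greedy_path C S [u1, U]" using gr1 by (simp add: gp_cons2)
      show "set [u1, U] \<subseteq> sharp C S" using u1S US sub by auto
      show "path_prod C (src C g) [u1, U] = g" using U prod2 by simp
    qed
    thus ?thesis using u1S US unfolding g_def by (intro exI[of _ "[u1, U]"]) simp
  qed
qed

end


context ctx begin

lemma M: "s \<in> S' \<Longrightarrow> is_path C (tgt C s) hs \<Longrightarrow> greedy_path C S hs \<Longrightarrow> set hs \<subseteq> S' \<Longrightarrow>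
  \<exists>ds. is_path C (src C s) ds \<and> greedy_path C S ds \<and> set ds \<subseteq> S' \<and>
       path_prod C (src C s) ds = cmp C s (path_prod C (tgt C s) hs)"
proof (induction hs arbitrary: s)
  case Nil
  have "s \<in> Mor C" using Nil S'M by auto
  thus ?case using Nil by (intro exI[of _ "[s]"]) simp
next
  case (Cons h hs)
  have s: "s \<in> Mor C" using Cons.prems S'M by auto
  have h: "h \<in> Mor C" "src C h = tgt C s" and ph: "is_path C (tgt C h) hs" using Cons.prems by auto
  have hS: "h \<in> S'" and hsS: "set hs \<subseteq> S'" using Cons.prems by auto
  have gph: "greedy_path C S hs" by (rule gp_tl[OF Cons.prems(3)])
  define P where "P = path_prod C (tgt C h) hs"
  have P: "P \<in> Mor C" "src C P = tgt C h" using path_mor[OF ph] unfolding P_def by auto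
  have grhP: "greedy2 C S h P" using L[OF Cons.prems(2) Cons.prems(3) SM] unfolding P_def .
  have sh: "cmp C s h \<in> Mor C" "src C (cmp C s h) = src C s" "tgt C (cmp C s h) = tgt C h"
    using s h by simp_all
  have RHS: "cmp C s (path_prod C (tgt C s) (h#hs)) = cmp C (cmp C s h) P"
    unfolding P_def using assoc[OF s h(1) P(1) h(2)[symmetric] P(2)[symmetric]] by (simp add: P_def)
  obtain D where D: "normal_decomp C S (cmp C s h) D" "set D \<subseteq> S'" "length D \<le> 2"
    using len2[OF Cons.prems(1) hS h(2)[symmetric]] by blast
  have pD: "is_path C (src C s) D" and gpD: "greedy_path C S D" and prD: "path_prod C (src C s) D = cmp C s h"
    using D(1) sh unfolding normal_decomp_def normal_path_def by auto
  consider "D = []" | u where "D = [u]" | u t where "D = [u, t]"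
    using D(3) by (cases D; simp; rename_tac a l; case_tac l; simp)
  thus ?case
  proof cases
    case 1
    have e: "cmp C s h = idm C (src C s)" using prD 1 by simp
    have th: "tgt C h = src C s" using sh(3) e s by simp
    have "cmp C (cmp C s h) P = P" using e P th idl[OF P(1)] by simp
    thus ?thesis using RHS ph th gph hsS unfolding P_def by (intro exI[of _ hs]) simp
  next
    case 2
    have uM: "u \<in> Mor C" using pD 2 by simp
    have e: "u = cmp C s h" using prD 2 uM by simp
    have gpu: "greedy_path C S (u#hs)"
    proof (cases hs)
      case Nil thus ?thesis by simp
    next
      case (Cons k ks)
      have "greedy2 C S h k" using Cons.prems(3) \<open>hs = k#ks\<close> by (simp add: gp_cons2)
      hence "greedy2 C S u k" using gr_pre[OF _ s h(1) h(2)[symmetric]] e by simp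
      thus ?thesis using gph \<open>hs = k#ks\<close> by (simp add: gp_cons2)
    qed
    show ?thesis
      using RHS ph gpu hsS D(2) 2 e sh unfolding P_def by (intro exI[of _ "u#hs"]) simp
  next
    case 3
    have u: "u \<in> Mor C" "src C u = src C s" and t: "t \<in> Mor C" "src C t = tgt C u" using pD 3 by auto
    have ut: "cmp C u t = cmp C s h" using prD 3 t by simp
    have tt: "tgt C t = tgt C h" using ut sh(3) u t by (metis cmp_tgt)
    have tS: "t \<in> S'" and uS: "u \<in> S'" using D(2) 3 by auto
    have gut: "greedy2 C S u t" using gpD 3 by (simp add: gp_cons2)
    obtain vs where vs: "is_path C (src C t) vs" "greedy_path C S vs" "set vs \<subseteq> S'"
      "path_prod C (src C t) vs = cmp C t (path_prod C (tgt C t) hs)"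
      using Cons.IH[OF tS] ph tt gph hsS by auto
    have vsP: "path_prod C (src C t) vs = cmp C t P" using vs(4) tt unfolding P_def by simp
    have gr3: "greedy2 C S u (cmp C t P)"
      using gr_comb[OF gut _ u(1) t(1) P(1) t(2)[symmetric]] gr_pre[OF grhP s h(1) h(2)[symmetric]] ut tt P(2)
      by simp
    have gpu: "greedy_path C S (u#vs)"
    proof (cases vs)
      case Nil thus ?thesis by simp
    next
      case (Cons v vs')
      have pv: "is_path C (src C t) (v#vs')" using vs(1) Cons by simp
      have v: "v \<in> Mor C" "src C v = src C t" and pvs: "is_path C (tgt C v) vs'" using pv by auto
      have V: "path_prod C (tgt C v) vs' \<in> Mor C" "src C (path_prod C (tgt C v) vs') = tgt C v"
        using path_mor[OF pvs] by auto
      have "cmp C t P = cmp C v (path_prod C (tgt C v) vs')" using vsP Cons by simp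
      hence "greedy2 C S u (cmp C v (path_prod C (tgt C v) vs'))" using gr3 by simp
      hence "greedy2 C S u v" using gr_ext[OF _ v(1) V(1) V(2)[symmetric] u(1) _ SM] v(2) t(2) by simp
      thus ?thesis using vs(2) Cons by (simp add: gp_cons2)
    qed
    have "path_prod C (src C s) (u#vs) = cmp C u (cmp C t P)" using vsP u t by simp
    also have "\<dots> = cmp C (cmp C u t) P" using assoc[OF u(1) t(1) P(1) t(2)[symmetric]] tt P(2) by simp
    also have "\<dots> = cmp C (cmp C s h) P" using ut by simp
    finally have pr: "path_prod C (src C s) (u#vs) = cmp C s (path_prod C (tgt C s) (h#hs))" using RHS by simp
    have "is_path C (src C s) (u#vs)" using u t vs(1) by simp
    thus ?thesis using pr gpu vs(3) uS by (intro exI[of _ "u#vs"]) simp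
  qed
qed

lemma main: "\<forall>g\<in>generated_subcat C S'. \<exists>gs. normal_decomp C S g gs \<and> set gs \<subseteq> S'"
proof
  fix g assume "g \<in> generated_subcat C S'"
  then obtain x gs where g: "g = path_prod C x gs" "is_path C x gs" "set gs \<subseteq> S'"
    unfolding generated_subcat_def by blast
  have "\<exists>ds. is_path C x ds \<and> greedy_path C S ds \<and> set ds \<subseteq> S' \<and> path_prod C x ds = path_prod C x gs"
    using g(2,3)
  proof (induction gs arbitrary: x)
    case Nil thus ?case by (intro exI[of _ "[]"]) simp
  next
    case (Cons s gs)
    have s: "s \<in> S'" "src C s = x" and p: "is_path C (tgt C s) gs" and gsS: "set gs \<subseteq> S'" using Cons.prems by auto
    obtain hs where hs: "is_path C (tgt C s) hs" "greedy_path C S hs" "set hs \<subseteq> S'"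
      "path_prod C (tgt C s) hs = path_prod C (tgt C s) gs" using Cons.IH[OF p gsS] by blast
    obtain ds where ds: "is_path C (src C s) ds" "greedy_path C S ds" "set ds \<subseteq> S'"
       "path_prod C (src C s) ds = cmp C s (path_prod C (tgt C s) hs)" using M[OF s(1) hs(1-3)] by blast
    show ?case using ds hs(4) s(2) by (intro exI[of _ ds]) simp
  qed
  then obtain ds where ds: "is_path C x ds" "greedy_path C S ds" "set ds \<subseteq> S'" "path_prod C x ds = g"
    using g(1) by blast
  have "g \<in> Mor C \<and> src C g = x" using path_mor[OF g(2)] g(1) by simp
  hence "normal_decomp C S g ds" unfolding normal_decomp_def normal_path_def
    using ds sub by auto
  thus "\<exists>gs. normal_decomp C S g gs \<and> set gs \<subseteq> S'" using ds(3) by blast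
qed

end

theorem mainTheorem12:
  fixes C :: "('o, 'm) cat" and S S' :: "'m set"
  assumes "category C"
    and "left_cancellative C"
    and "garside_family C S"
    and "S' \<subseteq> sharp C S"
    and "\<forall>s\<in>S'. \<forall>e\<in>S' \<inter> invertibles C. defined C s e \<longrightarrow> cmp C s e \<in> S'"
    and "\<forall>s1\<in>S'. \<forall>s2\<in>S'. defined C s1 s2 \<longrightarrow>
           (\<exists>gs. normal_decomp C S (cmp C s1 s2) gs \<and> set gs \<subseteq> S')"
  shows "\<forall>g\<in>generated_subcat C S'. \<exists>gs. normal_decomp C S g gs \<and> set gs \<subseteq> S'"
proof -
  interpret ctx C S S' using assms by (unfold_locales) auto
  show ?thesis by (rule main)
qed

end
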